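(* (Completeness) Every valid sequent of $\text{HXPath}_{\rm D}$ is provable in the sequent calculus $\mathbf{G}$.
   Context: Syntax of $\text{HXPath}_{\rm D}$: fix pairwise disjoint sets $\mathsf{Prop}$ (propositions, countably infinite), $\mathsf{Nom}$ (nominals, countably infinite), $\mathsf{Mod}$ (modalities, finite), $\mathsf{Cmp}$ (comparisons, finite). Path expressions $\alpha,\beta ::= \mathsf{a} \mid i{:} \mid \varphi? \mid \alpha\beta$ and node expressions $\varphi,\psi ::= p \mid i \mid \bot \mid \varphi\to\psi \mid @_i\varphi \mid \langle \mathsf{a}\rangle\varphi \mid \langle\alpha =_{\mathsf{c}} \beta\rangle \mid \langle \alpha\neq_{\mathsf{c}}\beta\rangle$, with $p\in\mathsf{Prop}$, $i\in\mathsf{Nom}$, $\mathsf{a}\in\mathsf{Mod}$, $\mathsf{c}\in\mathsf{Cmp}$. Abbreviations: $\top:=\bot\to\bot$, $\neg\varphi:=\varphi\to\bot$, $\varphi\lor\psi := \neg\varphi\to\psi$, $\varphi\land\psi:=\neg(\varphi\to\neg\psi)$; $\epsilon:=\top?$; $\langle j{:}\rangle\varphi := @_j\varphi$, $\langle\psi?\rangle\varphi:=\psi\land\varphi$, $\langle\alpha\beta\rangle\varphi:=\langle\alpha\rangle\langle\beta\rangle\varphi$. The symbol $\blacktriangle$ stands for either $=_{\mathsf{c}}$ or $\neq_{\mathsf{c}}$ (for some $\mathsf{c}$). Models: $\mathcal{M}=\langle N,\{R_{\mathsf a}\}_{\mathsf a\in\mathsf{Mod}},\{\approx_{\mathsf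 c}\}_{\mathsf c\in\mathsf{Cmp}},g,V\rangle$ with $N\neq\emptyset$, each $R_{\mathsf a}\subseteq N\times N$, each $\approx_{\mathsf c}$ an equivalence relation on $N$, $g:\mathsf{Nom}\to N$, $V:\mathsf{Prop}\to 2^N$. Semantics: $\mathcal M,n,n'\Vdash \mathsf a$ iff $nR_{\mathsf a}n'$; $\mathcal M,n,n'\Vdash i{:}$ iff $g(i)=n'$; $\mathcal M,n,n'\Vdash\varphi?$ iff $n=n'$ and $\mathcal M,n\Vdash\varphi$; $\mathcal M,n,n'\Vdash\alpha\beta$ iff there is $n''$ with $\mathcal M,n,n''\Vdash\alpha$ and $\mathcal M,n'',n'\Vdash\beta$; $\mathcal M,n\Vdash p$ iff $n\in V(p)$; $\mathcal M,n\Vdash i$ iff $g(i)=n$; $\bot$ never holds; $\to$ classical; $\mathcal M,n\Vdash @_i\varphi$ iff $\mathcal M,g(i)\Vdash\varphi$; $\mathcal M,n\Vdash\langle\mathsf a\rangle\varphi$ iff some $n'$ has $nR_{\mathsf a}n'$ and $\mathcal M,n'\Vdash\varphi$; $\mathcal M,n\Vdash\langle\alpha=_{\mathsf c}\beta\rangle$ (resp. $\langle\alpha\neq_{\mathsf c}\beta\rangle$) iff there are $n',n''$ with $\mathcal M,n,n'\Vdash\alpha$, $\mathcal M,n,n''\Vdash\beta$ and $n'\approx_{\mathsf c}n''$ (resp. $n'\not\approx_{\mathsf c}n''$). Sequents: a sequent $\Gamma\vdash\Delta$ consists of finite (possibly empty) sets $\Gamma,\Delta$ of node expressions each of the form $\langle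 i{:}\blacktriangle j{:}\rangle$ or $@_i\varphi$. It is valid iff for every model $\mathcal M$ and node $n$, if $\mathcal M,n\Vdash\gamma$ for all $\gamma\in\Gamma$ then $\mathcal M,n\Vdash\delta$ for some $\delta\in\Delta$. Notation "$\varphi,\Gamma$" means $\{\varphi\}\cup\Gamma$. The calculus $\mathbf{G}$ (each rule written premisses $\Rightarrow$ conclusion): (Ax) axiom $\varphi,\Gamma\vdash\Delta,\varphi$ where $\varphi$ is of the form $@_ip$, $@_ij$ or $\langle i{:}=_{\mathsf c}j{:}\rangle$; ($\bot$) axiom $@_i\bot,\Gamma\vdash\Delta$; ($\to$L) $\Gamma\vdash\Delta,@_i\varphi$ and $@_i\psi,\Gamma\vdash\Delta$ $\Rightarrow$ $@_i(\varphi\to\psi),\Gamma\vdash\Delta$; ($\to$R) $@_i\varphi,\Gamma\vdash\Delta,@_i\psi\Rightarrow\Gamma\vdash\Delta,@_i(\varphi\to\psi)$; ($@$T) $@_ii,\Gamma\vdash\Delta\Rightarrow\Gamma\vdash\Delta$; ($@5$) $@_jk,@_ij,@_ik,\Gamma\vdash\Delta\Rightarrow @_ij,@_ik,\Gamma\vdash\Delta$; (Nom) $@_ij,\Gamma\vdash\Delta\Rightarrow\Gamma\vdash\Delta$, $j$ not in the conclusion; (S$_1$) $@_j\varphi,@_ij,@_i\varphi,\Gamma\vdash\Delta\Rightarrow @_ij,@_i\varphi,\Gamma\vdash\Delta$, $\varphi$ of the form $p$, $\bot$ or $\langle\mathsf a\rangle k$; (S$_2$) $@_i\langle\mathsf a\rangle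 k,@_jk,@_i\langle\mathsf a\rangle j,\Gamma\vdash\Delta\Rightarrow @_jk,@_i\langle\mathsf a\rangle j,\Gamma\vdash\Delta$; (S$_3$) $\langle j{:}=_{\mathsf c}k{:}\rangle,@_ij,\langle i{:}=_{\mathsf c}k{:}\rangle,\Gamma\vdash\Delta\Rightarrow @_ij,\langle i{:}=_{\mathsf c}k{:}\rangle,\Gamma\vdash\Delta$; ($@$L) $@_i\varphi,\Gamma\vdash\Delta\Rightarrow @_j@_i\varphi,\Gamma\vdash\Delta$; ($@$R) $\Gamma\vdash\Delta,@_i\varphi\Rightarrow\Gamma\vdash\Delta,@_j@_i\varphi$; ($\langle\mathsf a\rangle$L) $@_i\langle\mathsf a\rangle j,@_j\varphi,\Gamma\vdash\Delta\Rightarrow @_i\langle\mathsf a\rangle\varphi,\Gamma\vdash\Delta$, $j$ not in the conclusion; ($\langle\mathsf a\rangle$R) $@_i\langle\mathsf a\rangle j,\Gamma\vdash\Delta,@_i\langle\mathsf a\rangle\varphi,@_j\varphi\Rightarrow @_i\langle\mathsf a\rangle j,\Gamma\vdash\Delta,@_i\langle\mathsf a\rangle\varphi$; ($\langle\blacktriangle\rangle$L) $@_i\langle\alpha\rangle j,@_i\langle\beta\rangle k,\langle j{:}\blacktriangle k{:}\rangle,\Gamma\vdash\Delta\Rightarrow @_i\langle\alpha\blacktriangle\beta\rangle,\Gamma\vdash\Delta$, $j,k$ distinct and not in the conclusion; ($\langle\blacktriangle\rangle$R) $@_i\langle\alpha\rangle j,@_i\langle\beta\rangle k,\Gamma\vdash\Delta,@_i\langle\alpha\blacktriangle\beta\rangle,\langle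 j{:}\blacktriangle k{:}\rangle\Rightarrow @_i\langle\alpha\rangle j,@_i\langle\beta\rangle k,\Gamma\vdash\Delta,@_i\langle\alpha\blacktriangle\beta\rangle$; (EqT) $\langle i{:}=_{\mathsf c}i{:}\rangle,\Gamma\vdash\Delta\Rightarrow\Gamma\vdash\Delta$; (Eq5) $\langle j{:}=_{\mathsf c}k{:}\rangle,\langle i{:}=_{\mathsf c}j{:}\rangle,\langle i{:}=_{\mathsf c}k{:}\rangle,\Gamma\vdash\Delta\Rightarrow\langle i{:}=_{\mathsf c}j{:}\rangle,\langle i{:}=_{\mathsf c}k{:}\rangle,\Gamma\vdash\Delta$; (NEqL) $\Gamma\vdash\Delta,\langle i{:}=_{\mathsf c}j{:}\rangle\Rightarrow\langle i{:}\neq_{\mathsf c}j{:}\rangle,\Gamma\vdash\Delta$; (NEqR) $\langle i{:}=_{\mathsf c}j{:}\rangle,\Gamma\vdash\Delta\Rightarrow\Gamma\vdash\Delta,\langle i{:}\neq_{\mathsf c}j{:}\rangle$; (Cut) $\Gamma\vdash\Delta,\varphi$ and $\varphi,\Gamma'\vdash\Delta'\Rightarrow\Gamma,\Gamma'\vdash\Delta,\Delta'$; (WL) $\Gamma\vdash\Delta\Rightarrow\varphi,\Gamma\vdash\Delta$; (WR) $\Gamma\vdash\Delta\Rightarrow\Gamma\vdash\Delta,\varphi$. Here $@_i\langle\alpha\rangle j$ for a path $\alpha$ is understood via the abbreviations above. A derivation is a finite tree of sequents in which each non-leaf node is the conclusion of an instance of a rule of $\mathbf G$ whose premisses are its children.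 A sequent is provable in $\mathbf G$ if it is the root of a derivation all of whose leaves are instances of (Ax) or ($\bot$). *)

theory Defs
  imports Main "HOL-Library.Countable" "HOL-Library.Infinite_Typeclass"
begin

text \<open>'p = Prop, 'n = Nom, 'm = Mod, 'c = Cmp (disjoint by being distinct types).\<close>

datatype ('p, 'n, 'm, 'c) path =
    PMod 'm
  | PNom 'n
  | PTest "('p, 'n, 'm, 'c) node"
  | PComp "('p, 'n, 'm, 'c) path" "('p, 'n, 'm, 'c) path"
and ('p, 'n, 'm, 'c) node =
    NProp 'p
  | NNom 'n
  | NBot
  | NImp "('p, 'n, 'm, 'c) node" "('p, 'n, 'm, 'c) node"
  | NAt 'n "('p, 'n, 'm, 'c) node"
  | NDia 'm "('p, 'n, 'm, 'c) node"
  | NEq "('p, 'n, 'm, 'c) path" 'c "('p, 'n, 'm, 'c) path"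
  | NNeq "('p, 'n, 'm, 'c) path" 'c "('p, 'n, 'm, 'c) path"

definition NNeg :: "('p,'n,'m,'c) node \<Rightarrow> ('p,'n,'m,'c) node" where
  "NNeg \<phi> = NImp \<phi> NBot"

definition NConj :: "('p,'n,'m,'c) node \<Rightarrow> ('p,'n,'m,'c) node \<Rightarrow> ('p,'n,'m,'c) node" where
  "NConj \<phi> \<psi> = NNeg (NImp \<phi> (NNeg \<psi>))"

fun dia :: "('p,'n,'m,'c) path \<Rightarrow> ('p,'n,'m,'c) node \<Rightarrow> ('p,'n,'m,'c) node" where
  "dia (PMod a) \<phi> = NDia a \<phi>"
| "dia (PNom j) \<phi> = NAt j \<phi>"
| "dia (PTest \<psi>) \<phi> = NConj \<psi> \<phi>"
| "dia (PComp \<alpha> \<beta>) \<phi> = dia \<alpha> (dia \<beta> \<phi>)"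

fun cmp :: "bool \<Rightarrow> ('p,'n,'m,'c) path \<Rightarrow> 'c \<Rightarrow> ('p,'n,'m,'c) path \<Rightarrow> ('p,'n,'m,'c) node" where
  "cmp True \<alpha> c \<beta> = NEq \<alpha> c \<beta>"
| "cmp False \<alpha> c \<beta> = NNeq \<alpha> c \<beta>"

abbreviation eqn :: "'n \<Rightarrow> 'c \<Rightarrow> 'n \<Rightarrow> ('p,'n,'m,'c) node" where
  "eqn i c j \<equiv> NEq (PNom i) c (PNom j)"

abbreviation neqn :: "'n \<Rightarrow> 'c \<Rightarrow> 'n \<Rightarrow> ('p,'n,'m,'c) node" where
  "neqn i c j \<equiv> NNeq (PNom i) c (PNom j)"

fun noms_p :: "('p,'n,'m,'c) path \<Rightarrow> 'n set"
and noms_n :: "('p,'n,'m,'c) node \<Rightarrow> 'n set" where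
  "noms_p (PMod a) = {}"
| "noms_p (PNom i) = {i}"
| "noms_p (PTest \<phi>) = noms_n \<phi>"
| "noms_p (PComp \<alpha> \<beta>) = noms_p \<alpha> \<union> noms_p \<beta>"
| "noms_n (NProp p) = {}"
| "noms_n (NNom i) = {i}"
| "noms_n NBot = {}"
| "noms_n (NImp \<phi> \<psi>) = noms_n \<phi> \<union> noms_n \<psi>"
| "noms_n (NAt i \<phi>) = insert i (noms_n \<phi>)"
| "noms_n (NDia a \<phi>) = noms_n \<phi>"
| "noms_n (NEq \<alpha> c \<beta>) = noms_p \<alpha> \<union> noms_p \<beta>"
| "noms_n (NNeq \<alpha> c \<beta>) = noms_p \<alpha> \<union> noms_p \<beta>"

definition noms_seq :: "('p,'n,'m,'c) node set \<Rightarrow> ('p,'n,'m,'c) node set \<Rightarrow> 'n set" where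
  "noms_seq \<Gamma> \<Delta> = (\<Union>\<phi>\<in>\<Gamma> \<union> \<Delta>. noms_n \<phi>)"

record ('w, 'p, 'n, 'm, 'c) model =
  Nodes :: "'w set"
  Rel   :: "'m \<Rightarrow> 'w \<Rightarrow> 'w \<Rightarrow> bool"
  Eqv   :: "'c \<Rightarrow> 'w \<Rightarrow> 'w \<Rightarrow> bool"
  gval  :: "'n \<Rightarrow> 'w"
  Val   :: "'p \<Rightarrow> 'w set"

definition is_model :: "('w, 'p, 'n, 'm, 'c) model \<Rightarrow> bool" where
  "is_model M \<longleftrightarrow>
     Nodes M \<noteq> {}
   \<and> (\<forall>a x y. Rel M a x y \<longrightarrow> x \<in> Nodes M \<and> y \<in> Nodes M)
   \<and> (\<forall>c. equiv (Nodes M) {(x, y). Eqv M c x y})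
   \<and> (\<forall>i. gval M i \<in> Nodes M)
   \<and> (\<forall>p. Val M p \<subseteq> Nodes M)"

fun psem :: "('w, 'p, 'n, 'm, 'c) model \<Rightarrow> 'w \<Rightarrow> 'w \<Rightarrow> ('p,'n,'m,'c) path \<Rightarrow> bool"
and nsem :: "('w, 'p, 'n, 'm, 'c) model \<Rightarrow> 'w \<Rightarrow> ('p,'n,'m,'c) node \<Rightarrow> bool" where
  "psem M n n' (PMod a) \<longleftrightarrow> Rel M a n n'"
| "psem M n n' (PNom i) \<longleftrightarrow> gval M i = n'"
| "psem M n n' (PTest \<phi>) \<longleftrightarrow> n = n' \<and> nsem M n \<phi>"
| "psem M n n' (PComp \<alpha> \<beta>) \<longleftrightarrow> (\<exists>n''\<in>Nodes M. psem M n n'' \<alpha> \<and> psem M n'' n' \<beta>)"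
| "nsem M n (NProp p) \<longleftrightarrow> n \<in> Val M p"
| "nsem M n (NNom i) \<longleftrightarrow> gval M i = n"
| "nsem M n NBot \<longleftrightarrow> False"
| "nsem M n (NImp \<phi> \<psi>) \<longleftrightarrow> (nsem M n \<phi> \<longrightarrow> nsem M n \<psi>)"
| "nsem M n (NAt i \<phi>) \<longleftrightarrow> nsem M (gval M i) \<phi>"
| "nsem M n (NDia a \<phi>) \<longleftrightarrow> (\<exists>n'\<in>Nodes M. Rel M a n n' \<and> nsem M n' \<phi>)"
| "nsem M n (NEq \<alpha> c \<beta>) \<longleftrightarrow>
     (\<exists>n'\<in>Nodes M. \<exists>n''\<in>Nodes M. psem M n n' \<alpha> \<and> psem M n n'' \<beta> \<and> Eqv M c n' n'')"
| "nsem M n (NNeq \<alpha> c \<beta>) \<longleftrightarrow>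
     (\<exists>n'\<in>Nodes M. \<exists>n''\<in>Nodes M. psem M n n' \<alpha> \<and> psem M n n'' \<beta> \<and> \<not> Eqv M c n' n'')"

definition seq_formula :: "('p,'n,'m,'c) node \<Rightarrow> bool" where
  "seq_formula \<phi> \<longleftrightarrow>
     (\<exists>i \<psi>. \<phi> = NAt i \<psi>) \<or> (\<exists>i c j. \<phi> = eqn i c j \<or> \<phi> = neqn i c j)"

definition is_sequent :: "('p,'n,'m,'c) node set \<Rightarrow> ('p,'n,'m,'c) node set \<Rightarrow> bool" where
  "is_sequent \<Gamma> \<Delta> \<longleftrightarrow> finite \<Gamma> \<and> finite \<Delta> \<and> (\<forall>\<phi>\<in>\<Gamma> \<union> \<Delta>. seq_formula \<phi>)"

text \<open>Models are taken with carrier a subset of nat: HOL cannot quantify over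
  all types inside a formula (the language is countable, so countable
  models suffice by downward Loewenheim-Skolem).\<close>
definition valid_seq :: "('p,'n,'m,'c) node set \<Rightarrow> ('p,'n,'m,'c) node set \<Rightarrow> bool" where
  "valid_seq \<Gamma> \<Delta> \<longleftrightarrow>
     (\<forall>M :: (nat, 'p, 'n, 'm, 'c) model. is_model M \<longrightarrow>
        (\<forall>n\<in>Nodes M. (\<forall>\<gamma>\<in>\<Gamma>. nsem M n \<gamma>) \<longrightarrow> (\<exists>\<delta>\<in>\<Delta>. nsem M n \<delta>)))"

inductive G_prov :: "('p,'n,'m,'c) node set \<Rightarrow> ('p,'n,'m,'c) node set \<Rightarrow> bool" where
  Ax: "\<lbrakk> is_sequent (insert \<phi> \<Gamma>) (insert \<phi> \<Delta>);
         (\<exists>i p. \<phi> = NAt i (NProp p)) \<or> (\<exists>i j. \<phi> = NAt i (NNom j)) \<or> (\<exists>i c j. \<phi> = eqn i c j) \<rbrakk>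
       \<Longrightarrow> G_prov (insert \<phi> \<Gamma>) (insert \<phi> \<Delta>)"
| Bot: "is_sequent (insert (NAt i NBot) \<Gamma>) \<Delta> \<Longrightarrow> G_prov (insert (NAt i NBot) \<Gamma>) \<Delta>"
| ImpL: "\<lbrakk> is_sequent (insert (NAt i (NImp \<phi> \<psi>)) \<Gamma>) \<Delta>;
          G_prov \<Gamma> (insert (NAt i \<phi>) \<Delta>); G_prov (insert (NAt i \<psi>) \<Gamma>) \<Delta> \<rbrakk>
        \<Longrightarrow> G_prov (insert (NAt i (NImp \<phi> \<psi>)) \<Gamma>) \<Delta>"
| ImpR: "\<lbrakk> is_sequent \<Gamma> (insert (NAt i (NImp \<phi> \<psi>)) \<Delta>);
          G_prov (insert (NAt i \<phi>) \<Gamma>) (insert (NAt i \<psi>) \<Delta>) \<rbrakk>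
        \<Longrightarrow> G_prov \<Gamma> (insert (NAt i (NImp \<phi> \<psi>)) \<Delta>)"
| AtT: "\<lbrakk> is_sequent \<Gamma> \<Delta>; G_prov (insert (NAt i (NNom i)) \<Gamma>) \<Delta> \<rbrakk> \<Longrightarrow> G_prov \<Gamma> \<Delta>"
| At5: "\<lbrakk> is_sequent (insert (NAt i (NNom j)) (insert (NAt i (NNom k)) \<Gamma>)) \<Delta>;
         G_prov (insert (NAt j (NNom k)) (insert (NAt i (NNom j)) (insert (NAt i (NNom k)) \<Gamma>))) \<Delta> \<rbrakk>
       \<Longrightarrow> G_prov (insert (NAt i (NNom j)) (insert (NAt i (NNom k)) \<Gamma>)) \<Delta>"
| Nom: "\<lbrakk> is_sequent \<Gamma> \<Delta>; j \<notin> noms_seq \<Gamma> \<Delta>; G_prov (insert (NAt i (NNom j)) \<Gamma>) \<Delta> \<rbrakk>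
       \<Longrightarrow> G_prov \<Gamma> \<Delta>"
| S1: "\<lbrakk> is_sequent (insert (NAt i (NNom j)) (insert (NAt i \<phi>) \<Gamma>)) \<Delta>;
        (\<exists>p. \<phi> = NProp p) \<or> \<phi> = NBot \<or> (\<exists>a k. \<phi> = NDia a (NNom k));
        G_prov (insert (NAt j \<phi>) (insert (NAt i (NNom j)) (insert (NAt i \<phi>) \<Gamma>))) \<Delta> \<rbrakk>
      \<Longrightarrow> G_prov (insert (NAt i (NNom j)) (insert (NAt i \<phi>) \<Gamma>)) \<Delta>"
| S2: "\<lbrakk> is_sequent (insert (NAt j (NNom k)) (insert (NAt i (NDia a (NNom j))) \<Gamma>)) \<Delta>;
        G_prov (insert (NAt i (NDia a (NNom k))) (insert (NAt j (NNom k))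
                  (insert (NAt i (NDia a (NNom j))) \<Gamma>))) \<Delta> \<rbrakk>
      \<Longrightarrow> G_prov (insert (NAt j (NNom k)) (insert (NAt i (NDia a (NNom j))) \<Gamma>)) \<Delta>"
| S3: "\<lbrakk> is_sequent (insert (NAt i (NNom j)) (insert (eqn i c k) \<Gamma>)) \<Delta>;
        G_prov (insert (eqn j c k) (insert (NAt i (NNom j)) (insert (eqn i c k) \<Gamma>))) \<Delta> \<rbrakk>
      \<Longrightarrow> G_prov (insert (NAt i (NNom j)) (insert (eqn i c k) \<Gamma>)) \<Delta>"
| AtL: "\<lbrakk> is_sequent (insert (NAt j (NAt i \<phi>)) \<Gamma>) \<Delta>; G_prov (insert (NAt i \<phi>) \<Gamma>) \<Delta> \<rbrakk>
       \<Longrightarrow> G_prov (insert (NAt j (NAt i \<phi>)) \<Gamma>) \<Delta>"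
| AtR: "\<lbrakk> is_sequent \<Gamma> (insert (NAt j (NAt i \<phi>)) \<Delta>); G_prov \<Gamma> (insert (NAt i \<phi>) \<Delta>) \<rbrakk>
       \<Longrightarrow> G_prov \<Gamma> (insert (NAt j (NAt i \<phi>)) \<Delta>)"
| DiaL: "\<lbrakk> is_sequent (insert (NAt i (NDia a \<phi>)) \<Gamma>) \<Delta>;
          j \<notin> noms_seq (insert (NAt i (NDia a \<phi>)) \<Gamma>) \<Delta>;
          G_prov (insert (NAt i (NDia a (NNom j))) (insert (NAt j \<phi>) \<Gamma>)) \<Delta> \<rbrakk>
        \<Longrightarrow> G_prov (insert (NAt i (NDia a \<phi>)) \<Gamma>) \<Delta>"
| DiaR: "\<lbrakk> is_sequent (insert (NAt i (NDia a (NNom j))) \<Gamma>) (insert (NAt i (NDia a \<phi>)) \<Delta>);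
          G_prov (insert (NAt i (NDia a (NNom j))) \<Gamma>) (insert (NAt i (NDia a \<phi>)) (insert (NAt j \<phi>) \<Delta>)) \<rbrakk>
        \<Longrightarrow> G_prov (insert (NAt i (NDia a (NNom j))) \<Gamma>) (insert (NAt i (NDia a \<phi>)) \<Delta>)"
| CmpL: "\<lbrakk> is_sequent (insert (NAt i (cmp b \<alpha> c \<beta>)) \<Gamma>) \<Delta>;
          j \<noteq> k;
          j \<notin> noms_seq (insert (NAt i (cmp b \<alpha> c \<beta>)) \<Gamma>) \<Delta>;
          k \<notin> noms_seq (insert (NAt i (cmp b \<alpha> c \<beta>)) \<Gamma>) \<Delta>;
          G_prov (insert (NAt i (dia \<alpha> (NNom j))) (insert (NAt i (dia \<beta> (NNom k)))
                    (insert (cmp b (PNom j) c (PNom k)) \<Gamma>))) \<Delta> \<rbrakk>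
        \<Longrightarrow> G_prov (insert (NAt i (cmp b \<alpha> c \<beta>)) \<Gamma>) \<Delta>"
| CmpR: "\<lbrakk> is_sequent (insert (NAt i (dia \<alpha> (NNom j))) (insert (NAt i (dia \<beta> (NNom k))) \<Gamma>))
                      (insert (NAt i (cmp b \<alpha> c \<beta>)) \<Delta>);
          G_prov (insert (NAt i (dia \<alpha> (NNom j))) (insert (NAt i (dia \<beta> (NNom k))) \<Gamma>))
                 (insert (NAt i (cmp b \<alpha> c \<beta>)) (insert (cmp b (PNom j) c (PNom k)) \<Delta>)) \<rbrakk>
        \<Longrightarrow> G_prov (insert (NAt i (dia \<alpha> (NNom j))) (insert (NAt i (dia \<beta> (NNom k))) \<Gamma>))
                   (insert (NAt i (cmp b \<alpha> c \<beta>)) \<Delta>)"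
| EqT: "\<lbrakk> is_sequent \<Gamma> \<Delta>; G_prov (insert (eqn i c i) \<Gamma>) \<Delta> \<rbrakk> \<Longrightarrow> G_prov \<Gamma> \<Delta>"
| Eq5: "\<lbrakk> is_sequent (insert (eqn i c j) (insert (eqn i c k) \<Gamma>)) \<Delta>;
         G_prov (insert (eqn j c k) (insert (eqn i c j) (insert (eqn i c k) \<Gamma>))) \<Delta> \<rbrakk>
       \<Longrightarrow> G_prov (insert (eqn i c j) (insert (eqn i c k) \<Gamma>)) \<Delta>"
| NEqL: "\<lbrakk> is_sequent (insert (neqn i c j) \<Gamma>) \<Delta>; G_prov \<Gamma> (insert (eqn i c j) \<Delta>) \<rbrakk>
        \<Longrightarrow> G_prov (insert (neqn i c j) \<Gamma>) \<Delta>"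
| NEqR: "\<lbrakk> is_sequent \<Gamma> (insert (neqn i c j) \<Delta>); G_prov (insert (eqn i c j) \<Gamma>) \<Delta> \<rbrakk>
        \<Longrightarrow> G_prov \<Gamma> (insert (neqn i c j) \<Delta>)"
| Cut: "\<lbrakk> is_sequent (\<Gamma> \<union> \<Gamma>') (\<Delta> \<union> \<Delta>'); G_prov \<Gamma> (insert \<phi> \<Delta>); G_prov (insert \<phi> \<Gamma>') \<Delta>' \<rbrakk>
       \<Longrightarrow> G_prov (\<Gamma> \<union> \<Gamma>') (\<Delta> \<union> \<Delta>')"
| WL: "\<lbrakk> is_sequent (insert \<phi> \<Gamma>) \<Delta>; G_prov \<Gamma> \<Delta> \<rbrakk> \<Longrightarrow> G_prov (insert \<phi> \<Gamma>) \<Delta>"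
| WR: "\<lbrakk> is_sequent \<Gamma> (insert \<phi> \<Delta>); G_prov \<Gamma> \<Delta> \<rbrakk> \<Longrightarrow> G_prov \<Gamma> (insert \<phi> \<Delta>)"

end

theory Submission
  imports Defs
begin


instance node and path :: (countable,countable,countable,countable) countable
  by countable_datatype

lemma noms_finite_n: "finite (noms_n \<phi>)"
  by (rule node.induct[of "\<lambda>\<alpha>. finite (noms_p \<alpha>)" "\<lambda>\<phi>. finite (noms_n \<phi>)"]) auto
lemmas noms_finite = noms_finite_n

lemma noms_seq_finite: "is_sequent G D \<Longrightarrow> finite (noms_seq G D)"
  unfolding noms_seq_def is_sequent_def using noms_finite by auto

definition fresh :: "'n::infinite set \<Rightarrow> 'n" where "fresh S = (SOME j. j \<notin> S)"

lemma fresh: "finite S \<Longrightarrow> fresh S \<notin> S"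
  unfolding fresh_def by (rule someI_ex) (metis ex_new_if_finite infinite_UNIV)

datatype ('p,'n,'m,'c) task =
  TAtT 'n | TEqT 'n 'c | TAt5 'n 'n 'n | TS1 'n 'n "('p,'n,'m,'c) node" | TS2 'n 'n 'n 'm
| TS3 'n 'n 'n 'c | TEq5 'n 'n 'n 'c
| TImpL 'n "('p,'n,'m,'c) node" "('p,'n,'m,'c) node"
| TImpR 'n "('p,'n,'m,'c) node" "('p,'n,'m,'c) node"
| TAtL 'n 'n "('p,'n,'m,'c) node" | TAtR 'n 'n "('p,'n,'m,'c) node"
| TDiaL 'n 'm "('p,'n,'m,'c) node" | TDiaR 'n 'm 'n "('p,'n,'m,'c) node"
| TCmpL 'n bool "('p,'n,'m,'c) path" 'c "('p,'n,'m,'c) path"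
| TCmpR 'n "('p,'n,'m,'c) path" "('p,'n,'m,'c) path" 'n 'n bool 'c
| TNEqL 'n 'c 'n | TNEqR 'n 'c 'n | TCut "('p,'n,'m,'c) node"

instance task :: (countable,countable,countable,countable) countable
  by countable_datatype

fun opts :: "('p,'n::infinite,'m,'c) task \<Rightarrow> ('p,'n,'m,'c) node set \<Rightarrow> ('p,'n,'m,'c) node set
   \<Rightarrow> (('p,'n,'m,'c) node set \<times> ('p,'n,'m,'c) node set) list" where
  "opts (TAtT i) G D = [(insert (NAt i (NNom i)) G, D)]"
| "opts (TEqT i c) G D = [(insert (eqn i c i) G, D)]"
| "opts (TAt5 i j k) G D = (if NAt i (NNom j) \<in> G \<and> NAt i (NNom k) \<in> G
     then [(insert (NAt j (NNom k)) G, D)] else [])"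
| "opts (TS1 i j \<phi>) G D = (if NAt i (NNom j) \<in> G \<and> NAt i \<phi> \<in> G \<and>
     ((\<exists>p. \<phi> = NProp p) \<or> \<phi> = NBot \<or> (\<exists>a k. \<phi> = NDia a (NNom k)))
     then [(insert (NAt j \<phi>) G, D)] else [])"
| "opts (TS2 i j k a) G D = (if NAt j (NNom k) \<in> G \<and> NAt i (NDia a (NNom j)) \<in> G
     then [(insert (NAt i (NDia a (NNom k))) G, D)] else [])"
| "opts (TS3 i j k c) G D = (if NAt i (NNom j) \<in> G \<and> eqn i c k \<in> G
     then [(insert (eqn j c k) G, D)] else [])"
| "opts (TEq5 i j k c) G D = (if eqn i c j \<in> G \<and> eqn i c k \<in> G
     then [(insert (eqn j c k) G, D)] else [])"
| "opts (TImpL i \<phi> \<psi>) G D = (if NAt i (NImp \<phi> \<psi>) \<in> G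
     then [(G, insert (NAt i \<phi>) D), (insert (NAt i \<psi>) G, D)] else [])"
| "opts (TImpR i \<phi> \<psi>) G D = (if NAt i (NImp \<phi> \<psi>) \<in> D
     then [(insert (NAt i \<phi>) G, insert (NAt i \<psi>) D)] else [])"
| "opts (TAtL j i \<phi>) G D = (if NAt j (NAt i \<phi>) \<in> G then [(insert (NAt i \<phi>) G, D)] else [])"
| "opts (TAtR j i \<phi>) G D = (if NAt j (NAt i \<phi>) \<in> D then [(G, insert (NAt i \<phi>) D)] else [])"
| "opts (TDiaL i a \<phi>) G D = (if NAt i (NDia a \<phi>) \<in> G
     then [(insert (NAt i (NDia a (NNom (fresh (noms_seq G D))))) (insert (NAt (fresh (noms_seq G D)) \<phi>) G), D)]
     else [])"
| "opts (TDiaR i a j \<phi>) G D = (if NAt i (NDia a (NNom j)) \<in> G \<and> NAt i (NDia a \<phi>) \<in> D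
     then [(G, insert (NAt j \<phi>) D)] else [])"
| "opts (TCmpL i b \<alpha> c \<beta>) G D = (if NAt i (cmp b \<alpha> c \<beta>) \<in> G
     then [(insert (NAt i (dia \<alpha> (NNom (fresh (noms_seq G D)))))
             (insert (NAt i (dia \<beta> (NNom (fresh (insert (fresh (noms_seq G D)) (noms_seq G D))))))
               (insert (cmp b (PNom (fresh (noms_seq G D))) c
                   (PNom (fresh (insert (fresh (noms_seq G D)) (noms_seq G D))))) G)), D)]
     else [])"
| "opts (TCmpR i \<alpha> \<beta> j k b c) G D = (if NAt i (dia \<alpha> (NNom j)) \<in> G \<and> NAt i (dia \<beta> (NNom k)) \<in> G
     \<and> NAt i (cmp b \<alpha> c \<beta>) \<in> D then [(G, insert (cmp b (PNom j) c (PNom k)) D)] else [])"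
| "opts (TNEqL i c j) G D = (if neqn i c j \<in> G then [(G, insert (eqn i c j) D)] else [])"
| "opts (TNEqR i c j) G D = (if neqn i c j \<in> D then [(insert (eqn i c j) G, D)] else [])"
| "opts (TCut \<phi>) G D = (if seq_formula \<phi> then [(G, insert \<phi> D), (insert \<phi> G, D)] else [])"

lemma seq_cmp: "seq_formula (cmp b (PNom j) c (PNom k))"
  by (cases b) (auto simp: seq_formula_def)

lemma is_seq_insL: "is_sequent (insert x G) D \<longleftrightarrow> seq_formula x \<and> is_sequent G D"
  by (auto simp: is_sequent_def)
lemma is_seq_insR: "is_sequent G (insert x D) \<longleftrightarrow> seq_formula x \<and> is_sequent G D"
  by (auto simp: is_sequent_def)
lemma seq_simps[simp]: "seq_formula (NAt i \<phi>)" "seq_formula (eqn i c j)" "seq_formula (neqn i c j)"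
  by (auto simp: seq_formula_def)

lemma opts_seq:
  assumes "is_sequent G D" "x \<in> set (opts t G D)"
  shows "is_sequent (fst x) (snd x) \<and> G \<subseteq> fst x \<and> D \<subseteq> snd x"
  using assms by (cases t) (simp_all add: is_seq_insL is_seq_insR seq_cmp subset_insertI2 split: if_splits;
     (elim conjE disjE)?; simp add: is_seq_insL is_seq_insR subset_insertI2)+




lemma opts_sound:
  assumes s: "is_sequent G D" and ne: "opts t G D \<noteq> []"
    and all: "\<forall>x\<in>set (opts t G D). G_prov (fst x) (snd x)"
  shows "G_prov G D"
proof (cases t)
  case (TAtT i) thus ?thesis using all s AtT[of G D i] by simp
next
  case (TEqT i c) thus ?thesis using all s EqT[of G D i c] by simp
next
  case (TImpL i \<phi> \<psi>)
  hence m: "NAt i (NImp \<phi> \<psi>) \<in> G" using ne by (simp split: if_splits)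
  hence p: "G_prov G (insert (NAt i \<phi>) D)" "G_prov (insert (NAt i \<psi>) G) D" using all TImpL by simp_all
  have "G_prov (insert (NAt i (NImp \<phi> \<psi>)) G) D" by (rule ImpL[OF _ p]) (simp add: m s insert_absorb)
  thus ?thesis using m by (simp add: insert_absorb)
next
  case (TAt5 i j k)
  hence m: "NAt i (NNom j) \<in> G" "NAt i (NNom k) \<in> G" using ne by (simp_all split: if_splits)
  hence p: "G_prov (insert (NAt j (NNom k)) G) D" using all TAt5 by simp
  have "G_prov (insert (NAt i (NNom j)) (insert (NAt i (NNom k)) G)) D" by (rule At5) (simp_all add: m s insert_absorb p)
  thus ?thesis using m by (simp add: insert_absorb)
next
  case (TS1 i j \<phi>)
  hence m: "NAt i (NNom j) \<in> G" "NAt i \<phi> \<in> G"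
    "(\<exists>p. \<phi> = NProp p) \<or> \<phi> = NBot \<or> (\<exists>a k. \<phi> = NDia a (NNom k))" using ne by (simp_all split: if_splits)
  hence p: "G_prov (insert (NAt j \<phi>) G) D" using all TS1 by simp
  have "G_prov (insert (NAt i (NNom j)) (insert (NAt i \<phi>) G)) D" by (rule S1) (simp_all add: m s insert_absorb p)
  thus ?thesis using m by (simp add: insert_absorb)
next
  case (TS2 i j k a)
  hence m: "NAt j (NNom k) \<in> G" "NAt i (NDia a (NNom j)) \<in> G" using ne by (simp_all split: if_splits)
  hence p: "G_prov (insert (NAt i (NDia a (NNom k))) G) D" using all TS2 by simp
  have "G_prov (insert (NAt j (NNom k)) (insert (NAt i (NDia a (NNom j))) G)) D" by (rule S2) (simp_all add: m s insert_absorb p)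
  thus ?thesis using m by (simp add: insert_absorb)
next
  case (TS3 i j k c)
  hence m: "NAt i (NNom j) \<in> G" "eqn i c k \<in> G" using ne by (simp_all split: if_splits)
  hence p: "G_prov (insert (eqn j c k) G) D" using all TS3 by simp
  have "G_prov (insert (NAt i (NNom j)) (insert (eqn i c k) G)) D" by (rule S3) (simp_all add: m s insert_absorb p)
  thus ?thesis using m by (simp add: insert_absorb)
next
  case (TEq5 i j k c)
  hence m: "eqn i c j \<in> G" "eqn i c k \<in> G" using ne by (simp_all split: if_splits)
  hence p: "G_prov (insert (eqn j c k) G) D" using all TEq5 by simp
  have "G_prov (insert (eqn i c j) (insert (eqn i c k) G)) D" by (rule Eq5) (simp_all add: m s insert_absorb p)
  thus ?thesis using m by (simp add: insert_absorb)
next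
  case (TAtL j i \<phi>)
  hence m: "NAt j (NAt i \<phi>) \<in> G" using ne by (simp_all split: if_splits)
  hence p: "G_prov (insert (NAt i \<phi>) G) D" using all TAtL by simp
  have "G_prov (insert (NAt j (NAt i \<phi>)) G) D" by (rule AtL) (simp_all add: m s insert_absorb p)
  thus ?thesis using m by (simp add: insert_absorb)
next
  case (TAtR j i \<phi>)
  hence m: "NAt j (NAt i \<phi>) \<in> D" using ne by (simp_all split: if_splits)
  hence p: "G_prov G (insert (NAt i \<phi>) D)" using all TAtR by simp
  have "G_prov G (insert (NAt j (NAt i \<phi>)) D)" by (rule AtR) (simp_all add: m s insert_absorb p)
  thus ?thesis using m by (simp add: insert_absorb)
next
  case (TImpR i \<phi> \<psi>)
  hence m: "NAt i (NImp \<phi> \<psi>) \<in> D" using ne by (simp_all split: if_splits)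
  hence p: "G_prov (insert (NAt i \<phi>) G) (insert (NAt i \<psi>) D)" using all TImpR by simp
  have "G_prov G (insert (NAt i (NImp \<phi> \<psi>)) D)" by (rule ImpR) (simp_all add: m s insert_absorb p)
  thus ?thesis using m by (simp add: insert_absorb)
next
  case (TDiaR i a j \<phi>)
  hence m: "NAt i (NDia a (NNom j)) \<in> G" "NAt i (NDia a \<phi>) \<in> D" using ne by (simp_all split: if_splits)
  hence p: "G_prov G (insert (NAt j \<phi>) D)" using all TDiaR by simp
  have "G_prov (insert (NAt i (NDia a (NNom j))) G) (insert (NAt i (NDia a \<phi>)) D)" by (rule DiaR) (simp_all add: m s insert_absorb p)
  thus ?thesis using m by (simp add: insert_absorb)
next
  case (TCmpR i \<alpha> \<beta> j k b c)
  hence m: "NAt i (dia \<alpha> (NNom j)) \<in> G" "NAt i (dia \<beta> (NNom k)) \<in> G" "NAt i (cmp b \<alpha> c \<beta>) \<in> D" using ne by (simp_all split: if_splits)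
  hence p: "G_prov G (insert (cmp b (PNom j) c (PNom k)) D)" using all TCmpR by simp
  have "G_prov (insert (NAt i (dia \<alpha> (NNom j))) (insert (NAt i (dia \<beta> (NNom k))) G)) (insert (NAt i (cmp b \<alpha> c \<beta>)) D)" by (rule CmpR) (simp_all add: m s insert_absorb p)
  thus ?thesis using m by (simp add: insert_absorb)
next
  case (TNEqL i c j)
  hence m: "neqn i c j \<in> G" using ne by (simp_all split: if_splits)
  hence p: "G_prov G (insert (eqn i c j) D)" using all TNEqL by simp
  have "G_prov (insert (neqn i c j) G) D" by (rule NEqL) (simp_all add: m s insert_absorb p)
  thus ?thesis using m by (simp add: insert_absorb)
next
  case (TNEqR i c j)
  hence m: "neqn i c j \<in> D" using ne by (simp_all split: if_splits)
  hence p: "G_prov (insert (eqn i c j) G) D" using all TNEqR by simp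
  have "G_prov G (insert (neqn i c j) D)" by (rule NEqR) (simp_all add: m s insert_absorb p)
  thus ?thesis using m by (simp add: insert_absorb)
next
  case (TDiaL i a \<phi>)
  define j where "j = fresh (noms_seq G D)"
  have j: "j \<notin> noms_seq G D" unfolding j_def by (rule fresh) (simp add: noms_seq_finite s)
  have m: "NAt i (NDia a \<phi>) \<in> G" using TDiaL ne by (simp split: if_splits)
  hence p: "G_prov (insert (NAt i (NDia a (NNom j))) (insert (NAt j \<phi>) G)) D"
    using all TDiaL by (simp add: j_def[symmetric])
  have "G_prov (insert (NAt i (NDia a \<phi>)) G) D" by (rule DiaL[OF _ _ p]) (use m s j in \<open>simp_all add: insert_absorb\<close>)
  thus ?thesis using m by (simp add: insert_absorb)
next
  case (TCmpL i b \<alpha> c \<beta>)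
  define j where "j = fresh (noms_seq G D)"
  define k where "k = fresh (insert j (noms_seq G D))"
  have j: "j \<notin> noms_seq G D" unfolding j_def by (rule fresh) (simp add: noms_seq_finite s)
  have k: "k \<notin> insert j (noms_seq G D)" unfolding k_def by (rule fresh) (simp add: noms_seq_finite s)
  have mem: "NAt i (cmp b \<alpha> c \<beta>) \<in> G" using TCmpL ne by (simp split: if_splits)
  hence eq: "insert (NAt i (cmp b \<alpha> c \<beta>)) G = G" by (rule insert_absorb)
  have prem: "G_prov (insert (NAt i (dia \<alpha> (NNom j))) (insert (NAt i (dia \<beta> (NNom k)))
      (insert (cmp b (PNom j) c (PNom k)) G))) D"
    using all mem TCmpL by (simp add: j_def[symmetric] k_def[symmetric])
  have "G_prov (insert (NAt i (cmp b \<alpha> c \<beta>)) G) D"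
    by (rule CmpL[OF _ _ _ _ prem]) (use s j k eq in auto)
  thus ?thesis using eq by simp
next
  case (TCut \<phi>)
  hence "seq_formula \<phi>" using ne by (simp split: if_splits)
  hence a: "G_prov G (insert \<phi> D)" "G_prov (insert \<phi> G) D" using all TCut by simp_all
  have "G_prov (G \<union> G) (D \<union> D)" by (rule Cut[OF _ a]) (simp add: s)
  thus ?thesis by simp
qed




definition step :: "('p,'n::infinite,'m,'c) task \<Rightarrow> ('p,'n,'m,'c) node set \<times> ('p,'n,'m,'c) node set
   \<Rightarrow> ('p,'n,'m,'c) node set \<times> ('p,'n,'m,'c) node set" where
  "step t GD = (case List.find (\<lambda>x. \<not> G_prov (fst x) (snd x)) (opts t (fst GD) (snd GD)) of
      None \<Rightarrow> GD | Some x \<Rightarrow> x)"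

definition task_of :: "nat \<Rightarrow> ('p::countable,'n::countable,'m::countable,'c::countable) task" where
  "task_of n = from_nat (fst (prod_decode n))"

primrec stage :: "('p::countable,'n::{countable,infinite},'m::countable,'c::countable) node set
    \<times> ('p,'n,'m,'c) node set \<Rightarrow> nat \<Rightarrow> ('p,'n,'m,'c) node set \<times> ('p,'n,'m,'c) node set" where
  "stage GD 0 = GD"
| "stage GD (Suc n) = step (task_of n) (stage GD n)"

lemma find_some: "List.find P xs = Some x \<Longrightarrow> x \<in> set xs \<and> P x"
  by (auto simp: find_Some_iff)

lemma step_inv:
  assumes "is_sequent (fst GD) (snd GD)" "\<not> G_prov (fst GD) (snd GD)"
  shows "is_sequent (fst (step t GD)) (snd (step t GD)) \<and> \<not> G_prov (fst (step t GD)) (snd (step t GD))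
     \<and> fst GD \<subseteq> fst (step t GD) \<and> snd GD \<subseteq> snd (step t GD)"
proof (cases "List.find (\<lambda>x. \<not> G_prov (fst x) (snd x)) (opts t (fst GD) (snd GD))")
  case None thus ?thesis using assms by (simp add: step_def)
next
  case (Some x)
  hence "x \<in> set (opts t (fst GD) (snd GD))" "\<not> G_prov (fst x) (snd x)" using find_some by fastforce+
  thus ?thesis using Some opts_seq[OF assms(1)] by (simp add: step_def)
qed

lemma step_applied:
  assumes "is_sequent (fst GD) (snd GD)" "\<not> G_prov (fst GD) (snd GD)" "opts t (fst GD) (snd GD) \<noteq> []"
  shows "step t GD \<in> set (opts t (fst GD) (snd GD))"
proof (cases "List.find (\<lambda>x. \<not> G_prov (fst x) (snd x)) (opts t (fst GD) (snd GD))")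
  case None
  hence "\<forall>x\<in>set (opts t (fst GD) (snd GD)). G_prov (fst x) (snd x)" by (auto simp: find_None_iff)
  hence False using opts_sound assms by blast
  thus ?thesis ..
next
  case (Some x) thus ?thesis using find_some[OF Some] by (simp add: step_def)
qed

lemma fair: "\<exists>m\<ge>n. task_of m = t"
  by (rule exI[of _ "prod_encode (to_nat t, n)"]) (simp add: task_of_def le_prod_encode_2)

fun wp :: "('p,'n,'m,'c) path \<Rightarrow> nat" and wn :: "('p,'n,'m,'c) node \<Rightarrow> nat" where
  "wp (PMod a) = 2" | "wp (PNom i) = 2" | "wp (PTest \<psi>) = wn \<psi> + 6" | "wp (PComp \<alpha> \<beta>) = wp \<alpha> + wp \<beta>"
| "wn (NProp p) = 1" | "wn (NNom i) = 1" | "wn NBot = 1" | "wn (NImp \<phi> \<psi>) = wn \<phi> + wn \<psi> + 1"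
| "wn (NAt i \<phi>) = wn \<phi> + 1" | "wn (NDia a \<phi>) = wn \<phi> + 1"
| "wn (NEq \<alpha> c \<beta>) = wp \<alpha> + wp \<beta> + 1" | "wn (NNeq \<alpha> c \<beta>) = wp \<alpha> + wp \<beta> + 1"

lemma wp_ge: "wp \<alpha> \<ge> 2"
  by (rule path.induct[of "\<lambda>\<alpha>. wp \<alpha> \<ge> 2" "\<lambda>_. True"]) auto

lemma wn_dia: "wn (dia \<alpha> \<chi>) + 1 \<le> wp \<alpha> + wn \<chi>"
  by (induct \<alpha> \<chi> rule: dia.induct) (auto simp: NConj_def NNeg_def)

lemma wn_cmp: "wn (cmp b \<alpha> c \<beta>) = wp \<alpha> + wp \<beta> + 1"
  by (cases b) auto

lemma wn_dia_lt: "wn (dia \<alpha> (NNom j)) < wn (cmp b \<alpha> c \<beta>)" "wn (dia \<beta> (NNom j)) < wn (cmp b \<alpha> c \<beta>)"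
  using wn_dia[of \<alpha> "NNom j"] wn_dia[of \<beta> "NNom j"] by (auto simp: wn_cmp)

lemma sem_dia: "is_model M \<Longrightarrow> n \<in> Nodes M \<Longrightarrow>
   nsem M n (dia \<alpha> \<chi>) = (\<exists>n'\<in>Nodes M. psem M n n' \<alpha> \<and> nsem M n' \<chi>)"
  by (induct \<alpha> \<chi> arbitrary: n rule: dia.induct) (auto simp: NConj_def NNeg_def is_model_def)

lemma nsem_cmp: "nsem M n (cmp b \<alpha> c \<beta>) \<longleftrightarrow>
   (\<exists>n'\<in>Nodes M. \<exists>n''\<in>Nodes M. psem M n n' \<alpha> \<and> psem M n n'' \<beta> \<and> Eqv M c n' n'' = b)"
  by (cases b) auto




locale cons =
  fixes G0 D0 :: "('p::countable,'n::{countable,infinite},'m::countable,'c::countable) node set"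
  assumes seq0: "is_sequent G0 D0" and unp0: "\<not> G_prov G0 D0"
begin

abbreviation S where "S \<equiv> stage (G0, D0)"
definition L where "L = (\<Union>n. fst (S n))"
definition R where "R = (\<Union>n. snd (S n))"

lemma inv: "is_sequent (fst (S n)) (snd (S n)) \<and> \<not> G_prov (fst (S n)) (snd (S n))"
proof (induct n)
  case 0 thus ?case using seq0 unp0 by simp
next
  case (Suc n) thus ?case using step_inv[of "S n" "task_of n"] by simp
qed

lemma mono1: "fst (S n) \<subseteq> fst (S (Suc n)) \<and> snd (S n) \<subseteq> snd (S (Suc n))"
  using step_inv[of "S n" "task_of n"] inv[of n] by simp

lemma mono: "n \<le> m \<Longrightarrow> fst (S n) \<subseteq> fst (S m) \<and> snd (S n) \<subseteq> snd (S m)"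
proof (induct m)
  case 0 thus ?case by simp
next
  case (Suc m)
  thus ?case using mono1[of m] by (cases "n = Suc m") auto
qed

lemma stL: "x \<in> fst (S n) \<Longrightarrow> x \<in> L" unfolding L_def by blast
lemma stR: "x \<in> snd (S n) \<Longrightarrow> x \<in> R" unfolding R_def by blast

lemma evL: "x \<in> L \<Longrightarrow> eventually (\<lambda>m. x \<in> fst (S m)) sequentially"
  unfolding L_def eventually_sequentially using mono by blast
lemma evR: "x \<in> R \<Longrightarrow> eventually (\<lambda>m. x \<in> snd (S m)) sequentially"
  unfolding R_def eventually_sequentially using mono by blast

lemma key:
  assumes ev: "eventually P sequentially" and ne: "\<And>m. P m \<Longrightarrow> opts t (fst (S m)) (snd (S m)) \<noteq> []"
  shows "\<exists>m. P m \<and> (fst (S (Suc m)), snd (S (Suc m))) \<in> set (opts t (fst (S m)) (snd (S m)))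
     \<and> fst (S (Suc m)) \<subseteq> L \<and> snd (S (Suc m)) \<subseteq> R"
proof -
  from ev obtain n where n: "\<forall>m\<ge>n. P m" by (auto simp: eventually_sequentially)
  obtain m where m: "m \<ge> n" "task_of m = t" using fair by blast
  have h: "S (Suc m) \<in> set (opts t (fst (S m)) (snd (S m)))"
    using step_applied[of "S m" t] inv[of m] ne n m by simp
  have a: "fst (S (Suc m)) \<subseteq> L" "snd (S (Suc m)) \<subseteq> R" using stL stR by blast+
  show ?thesis using h n m(1) a by (intro exI[of _ m]) (simp del: stage.simps)
qed

lemma noAx:
  assumes "\<phi> \<in> L" "\<phi> \<in> R"
    "(\<exists>i p. \<phi> = NAt i (NProp p)) \<or> (\<exists>i j. \<phi> = NAt i (NNom j)) \<or> (\<exists>i c j. \<phi> = eqn i c j)"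
  shows False
proof -
  have "eventually (\<lambda>m. \<phi> \<in> fst (S m) \<and> \<phi> \<in> snd (S m)) sequentially"
    using evL[OF assms(1)] evR[OF assms(2)] eventually_conj by blast
  then obtain m where m: "\<phi> \<in> fst (S m)" "\<phi> \<in> snd (S m)" by (auto simp: eventually_sequentially)
  have "G_prov (insert \<phi> (fst (S m))) (insert \<phi> (snd (S m)))"
    by (rule Ax) (use inv[of m] m assms(3) in \<open>simp_all add: insert_absorb\<close>)
  thus False using inv[of m] m by (simp add: insert_absorb)
qed

lemma noBot: "NAt i NBot \<notin> L"
proof
  assume "NAt i NBot \<in> L"
  then obtain m where m: "NAt i NBot \<in> fst (S m)" using L_def by blast
  have "G_prov (insert (NAt i NBot) (fst (S m))) (snd (S m))"
    by (rule Bot) (use inv[of m] m in \<open>simp_all add: insert_absorb\<close>)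
  thus False using inv[of m] m by (simp add: insert_absorb)
qed

lemma cAtT: "NAt i (NNom i) \<in> L"
proof -
  have "\<exists>m. True \<and> (fst (S (Suc m)), snd (S (Suc m))) \<in> set (opts (TAtT i) (fst (S m)) (snd (S m)))
     \<and> fst (S (Suc m)) \<subseteq> L \<and> snd (S (Suc m)) \<subseteq> R" by (rule key) auto
  thus ?thesis by auto
qed

lemma cEqT: "eqn i c i \<in> L"
proof -
  have "\<exists>m. True \<and> (fst (S (Suc m)), snd (S (Suc m))) \<in> set (opts (TEqT i c) (fst (S m)) (snd (S m)))
     \<and> fst (S (Suc m)) \<subseteq> L \<and> snd (S (Suc m)) \<subseteq> R" by (rule key) auto
  thus ?thesis by auto
qed

lemma cAt5: assumes "NAt i (NNom j) \<in> L" "NAt i (NNom k) \<in> L" shows "NAt j (NNom k) \<in> L"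
proof -
  have ev: "eventually (\<lambda>m. NAt i (NNom j) \<in> fst (S m) \<and> NAt i (NNom k) \<in> fst (S m)) sequentially"
    using assms evL eventually_conj by blast
  have "\<exists>m. (NAt i (NNom j) \<in> fst (S m) \<and> NAt i (NNom k) \<in> fst (S m)) \<and>
     (fst (S (Suc m)), snd (S (Suc m))) \<in> set (opts (TAt5 i j k) (fst (S m)) (snd (S m)))
     \<and> fst (S (Suc m)) \<subseteq> L \<and> snd (S (Suc m)) \<subseteq> R" by (rule key[OF ev]) auto
  thus ?thesis by auto
qed

lemma cS1p: assumes "NAt i (NNom j) \<in> L" "NAt i (NProp p) \<in> L" shows "NAt j (NProp p) \<in> L"
proof -
  have ev: "eventually (\<lambda>m. NAt i (NNom j) \<in> fst (S m) \<and> NAt i (NProp p) \<in> fst (S m)) sequentially"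
    using assms evL evR eventually_conj by blast
  have "\<exists>m. (NAt i (NNom j) \<in> fst (S m) \<and> NAt i (NProp p) \<in> fst (S m)) \<and>
     (fst (S (Suc m)), snd (S (Suc m))) \<in> set (opts (TS1 i j (NProp p)) (fst (S m)) (snd (S m)))
     \<and> fst (S (Suc m)) \<subseteq> L \<and> snd (S (Suc m)) \<subseteq> R" by (rule key[OF ev]) auto
  thus ?thesis by fastforce
qed

lemma cS1d: assumes "NAt i (NNom j) \<in> L" "NAt i (NDia a (NNom k)) \<in> L" shows "NAt j (NDia a (NNom k)) \<in> L"
proof -
  have ev: "eventually (\<lambda>m. NAt i (NNom j) \<in> fst (S m) \<and> NAt i (NDia a (NNom k)) \<in> fst (S m)) sequentially"
    using assms evL evR eventually_conj by blast
  have "\<exists>m. (NAt i (NNom j) \<in> fst (S m) \<and> NAt i (NDia a (NNom k)) \<in> fst (S m)) \<and>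
     (fst (S (Suc m)), snd (S (Suc m))) \<in> set (opts (TS1 i j (NDia a (NNom k))) (fst (S m)) (snd (S m)))
     \<and> fst (S (Suc m)) \<subseteq> L \<and> snd (S (Suc m)) \<subseteq> R" by (rule key[OF ev]) auto
  thus ?thesis by fastforce
qed

lemma cS2: assumes "NAt j (NNom k) \<in> L" "NAt i (NDia a (NNom j)) \<in> L" shows "NAt i (NDia a (NNom k)) \<in> L"
proof -
  have ev: "eventually (\<lambda>m. NAt j (NNom k) \<in> fst (S m) \<and> NAt i (NDia a (NNom j)) \<in> fst (S m)) sequentially"
    using assms evL evR eventually_conj by blast
  have "\<exists>m. (NAt j (NNom k) \<in> fst (S m) \<and> NAt i (NDia a (NNom j)) \<in> fst (S m)) \<and>
     (fst (S (Suc m)), snd (S (Suc m))) \<in> set (opts (TS2 i j k a) (fst (S m)) (snd (S m)))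
     \<and> fst (S (Suc m)) \<subseteq> L \<and> snd (S (Suc m)) \<subseteq> R" by (rule key[OF ev]) auto
  thus ?thesis by fastforce
qed

lemma cS3: assumes "NAt i (NNom j) \<in> L" "eqn i c k \<in> L" shows "eqn j c k \<in> L"
proof -
  have ev: "eventually (\<lambda>m. NAt i (NNom j) \<in> fst (S m) \<and> eqn i c k \<in> fst (S m)) sequentially"
    using assms evL evR eventually_conj by blast
  have "\<exists>m. (NAt i (NNom j) \<in> fst (S m) \<and> eqn i c k \<in> fst (S m)) \<and>
     (fst (S (Suc m)), snd (S (Suc m))) \<in> set (opts (TS3 i j k c) (fst (S m)) (snd (S m)))
     \<and> fst (S (Suc m)) \<subseteq> L \<and> snd (S (Suc m)) \<subseteq> R" by (rule key[OF ev]) auto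
  thus ?thesis by fastforce
qed

lemma cEq5: assumes "eqn i c j \<in> L" "eqn i c k \<in> L" shows "eqn j c k \<in> L"
proof -
  have ev: "eventually (\<lambda>m. eqn i c j \<in> fst (S m) \<and> eqn i c k \<in> fst (S m)) sequentially"
    using assms evL evR eventually_conj by blast
  have "\<exists>m. (eqn i c j \<in> fst (S m) \<and> eqn i c k \<in> fst (S m)) \<and>
     (fst (S (Suc m)), snd (S (Suc m))) \<in> set (opts (TEq5 i j k c) (fst (S m)) (snd (S m)))
     \<and> fst (S (Suc m)) \<subseteq> L \<and> snd (S (Suc m)) \<subseteq> R" by (rule key[OF ev]) auto
  thus ?thesis by fastforce
qed

lemma cImpL: assumes "NAt i (NImp \<phi> \<psi>) \<in> L" shows "NAt i \<phi> \<in> R \<or> NAt i \<psi> \<in> L"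
proof -
  have ev: "eventually (\<lambda>m. NAt i (NImp \<phi> \<psi>) \<in> fst (S m)) sequentially"
    using assms evL evR eventually_conj by blast
  have "\<exists>m. (NAt i (NImp \<phi> \<psi>) \<in> fst (S m)) \<and>
     (fst (S (Suc m)), snd (S (Suc m))) \<in> set (opts (TImpL i \<phi> \<psi>) (fst (S m)) (snd (S m)))
     \<and> fst (S (Suc m)) \<subseteq> L \<and> snd (S (Suc m)) \<subseteq> R" by (rule key[OF ev]) auto
  thus ?thesis by fastforce
qed

lemma cImpR: assumes "NAt i (NImp \<phi> \<psi>) \<in> R" shows "NAt i \<phi> \<in> L \<and> NAt i \<psi> \<in> R"
proof -
  have ev: "eventually (\<lambda>m. NAt i (NImp \<phi> \<psi>) \<in> snd (S m)) sequentially"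
    using assms evL evR eventually_conj by blast
  have "\<exists>m. (NAt i (NImp \<phi> \<psi>) \<in> snd (S m)) \<and>
     (fst (S (Suc m)), snd (S (Suc m))) \<in> set (opts (TImpR i \<phi> \<psi>) (fst (S m)) (snd (S m)))
     \<and> fst (S (Suc m)) \<subseteq> L \<and> snd (S (Suc m)) \<subseteq> R" by (rule key[OF ev]) auto
  thus ?thesis by fastforce
qed

lemma cAtL: assumes "NAt j (NAt i \<phi>) \<in> L" shows "NAt i \<phi> \<in> L"
proof -
  have ev: "eventually (\<lambda>m. NAt j (NAt i \<phi>) \<in> fst (S m)) sequentially"
    using assms evL evR eventually_conj by blast
  have "\<exists>m. (NAt j (NAt i \<phi>) \<in> fst (S m)) \<and>
     (fst (S (Suc m)), snd (S (Suc m))) \<in> set (opts (TAtL j i \<phi>) (fst (S m)) (snd (S m)))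
     \<and> fst (S (Suc m)) \<subseteq> L \<and> snd (S (Suc m)) \<subseteq> R" by (rule key[OF ev]) auto
  thus ?thesis by fastforce
qed

lemma cAtR: assumes "NAt j (NAt i \<phi>) \<in> R" shows "NAt i \<phi> \<in> R"
proof -
  have ev: "eventually (\<lambda>m. NAt j (NAt i \<phi>) \<in> snd (S m)) sequentially"
    using assms evL evR eventually_conj by blast
  have "\<exists>m. (NAt j (NAt i \<phi>) \<in> snd (S m)) \<and>
     (fst (S (Suc m)), snd (S (Suc m))) \<in> set (opts (TAtR j i \<phi>) (fst (S m)) (snd (S m)))
     \<and> fst (S (Suc m)) \<subseteq> L \<and> snd (S (Suc m)) \<subseteq> R" by (rule key[OF ev]) auto
  thus ?thesis by fastforce
qed

lemma cDiaL: assumes "NAt i (NDia a \<phi>) \<in> L" shows "\<exists>j. NAt i (NDia a (NNom j)) \<in> L \<and> NAt j \<phi> \<in> L"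
proof -
  have ev: "eventually (\<lambda>m. NAt i (NDia a \<phi>) \<in> fst (S m)) sequentially"
    using assms evL evR eventually_conj by blast
  have "\<exists>m. (NAt i (NDia a \<phi>) \<in> fst (S m)) \<and>
     (fst (S (Suc m)), snd (S (Suc m))) \<in> set (opts (TDiaL i a \<phi>) (fst (S m)) (snd (S m)))
     \<and> fst (S (Suc m)) \<subseteq> L \<and> snd (S (Suc m)) \<subseteq> R" by (rule key[OF ev]) auto
  thus ?thesis by fastforce
qed

lemma cDiaR: assumes "NAt i (NDia a (NNom j)) \<in> L" "NAt i (NDia a \<phi>) \<in> R" shows "NAt j \<phi> \<in> R"
proof -
  have ev: "eventually (\<lambda>m. NAt i (NDia a (NNom j)) \<in> fst (S m) \<and> NAt i (NDia a \<phi>) \<in> snd (S m)) sequentially"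
    using assms evL evR eventually_conj by blast
  have "\<exists>m. (NAt i (NDia a (NNom j)) \<in> fst (S m) \<and> NAt i (NDia a \<phi>) \<in> snd (S m)) \<and>
     (fst (S (Suc m)), snd (S (Suc m))) \<in> set (opts (TDiaR i a j \<phi>) (fst (S m)) (snd (S m)))
     \<and> fst (S (Suc m)) \<subseteq> L \<and> snd (S (Suc m)) \<subseteq> R" by (rule key[OF ev]) auto
  thus ?thesis by fastforce
qed

lemma cCmpL: assumes "NAt i (cmp b \<alpha> c \<beta>) \<in> L" shows "\<exists>j k. NAt i (dia \<alpha> (NNom j)) \<in> L \<and> NAt i (dia \<beta> (NNom k)) \<in> L \<and> cmp b (PNom j) c (PNom k) \<in> L"
proof -
  have ev: "eventually (\<lambda>m. NAt i (cmp b \<alpha> c \<beta>) \<in> fst (S m)) sequentially"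
    using assms evL evR eventually_conj by blast
  have "\<exists>m. (NAt i (cmp b \<alpha> c \<beta>) \<in> fst (S m)) \<and>
     (fst (S (Suc m)), snd (S (Suc m))) \<in> set (opts (TCmpL i b \<alpha> c \<beta>) (fst (S m)) (snd (S m)))
     \<and> fst (S (Suc m)) \<subseteq> L \<and> snd (S (Suc m)) \<subseteq> R" by (rule key[OF ev]) auto
  thus ?thesis by fastforce
qed

lemma cCmpR: assumes "NAt i (dia \<alpha> (NNom j)) \<in> L" "NAt i (dia \<beta> (NNom k)) \<in> L" "NAt i (cmp b \<alpha> c \<beta>) \<in> R" shows "cmp b (PNom j) c (PNom k) \<in> R"
proof -
  have ev: "eventually (\<lambda>m. NAt i (dia \<alpha> (NNom j)) \<in> fst (S m) \<and> NAt i (dia \<beta> (NNom k)) \<in> fst (S m) \<and> NAt i (cmp b \<alpha> c \<beta>) \<in> snd (S m)) sequentially"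
    using assms evL evR eventually_conj by blast
  have "\<exists>m. (NAt i (dia \<alpha> (NNom j)) \<in> fst (S m) \<and> NAt i (dia \<beta> (NNom k)) \<in> fst (S m) \<and> NAt i (cmp b \<alpha> c \<beta>) \<in> snd (S m)) \<and>
     (fst (S (Suc m)), snd (S (Suc m))) \<in> set (opts (TCmpR i \<alpha> \<beta> j k b c) (fst (S m)) (snd (S m)))
     \<and> fst (S (Suc m)) \<subseteq> L \<and> snd (S (Suc m)) \<subseteq> R" by (rule key[OF ev]) auto
  thus ?thesis by fastforce
qed

lemma cNEqL: assumes "neqn i c j \<in> L" shows "eqn i c j \<in> R"
proof -
  have ev: "eventually (\<lambda>m. neqn i c j \<in> fst (S m)) sequentially"
    using assms evL evR eventually_conj by blast
  have "\<exists>m. (neqn i c j \<in> fst (S m)) \<and>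
     (fst (S (Suc m)), snd (S (Suc m))) \<in> set (opts (TNEqL i c j) (fst (S m)) (snd (S m)))
     \<and> fst (S (Suc m)) \<subseteq> L \<and> snd (S (Suc m)) \<subseteq> R" by (rule key[OF ev]) auto
  thus ?thesis by fastforce
qed

lemma cNEqR: assumes "neqn i c j \<in> R" shows "eqn i c j \<in> L"
proof -
  have ev: "eventually (\<lambda>m. neqn i c j \<in> snd (S m)) sequentially"
    using assms evL evR eventually_conj by blast
  have "\<exists>m. (neqn i c j \<in> snd (S m)) \<and>
     (fst (S (Suc m)), snd (S (Suc m))) \<in> set (opts (TNEqR i c j) (fst (S m)) (snd (S m)))
     \<and> fst (S (Suc m)) \<subseteq> L \<and> snd (S (Suc m)) \<subseteq> R" by (rule key[OF ev]) auto
  thus ?thesis by fastforce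
qed

lemma cCut: assumes "seq_formula \<phi>" shows "\<phi> \<in> L \<or> \<phi> \<in> R"
proof -
  have ev: "eventually (\<lambda>m. seq_formula \<phi>) sequentially" using assms by simp
  have "\<exists>m. seq_formula \<phi> \<and>
     (fst (S (Suc m)), snd (S (Suc m))) \<in> set (opts (TCut \<phi>) (fst (S m)) (snd (S m)))
     \<and> fst (S (Suc m)) \<subseteq> L \<and> snd (S (Suc m)) \<subseteq> R" by (rule key[OF ev]) auto
  thus ?thesis by fastforce
qed

end



context cons begin

definition E where "E i j \<longleftrightarrow> NAt i (NNom j) \<in> L"
definition rep where "rep i = (SOME k. E i k)"
definition nd :: "'n \<Rightarrow> nat" where "nd i = to_nat (rep i)"

definition M :: "(nat,'p,'n,'m,'c) model" where
  "M = \<lparr>Nodes = range nd,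
        Rel = (\<lambda>a x y. \<exists>i j. x = nd i \<and> y = nd j \<and> NAt i (NDia a (NNom j)) \<in> L),
        Eqv = (\<lambda>c x y. \<exists>i j. x = nd i \<and> y = nd j \<and> eqn i c j \<in> L),
        gval = nd,
        Val = (\<lambda>p. {nd i | i. NAt i (NProp p) \<in> L})\<rparr>"

lemma E_refl: "E i i" unfolding E_def by (rule cAtT)
lemma E_sym: "E i j \<Longrightarrow> E j i" unfolding E_def using cAt5 cAtT by blast
lemma E_trans: "E i j \<Longrightarrow> E j k \<Longrightarrow> E i k"
  using E_sym unfolding E_def using cAt5 by blast

lemma nd_eq: "nd i = nd j \<longleftrightarrow> E i j"
proof
  assume "nd i = nd j"
  hence r: "rep i = rep j" by (simp add: nd_def)
  have "E i (rep i)" unfolding rep_def by (rule someI[of "E i" i]) (rule E_refl)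
  moreover have "E j (rep j)" unfolding rep_def by (rule someI[of "E j" j]) (rule E_refl)
  ultimately show "E i j" using r E_sym E_trans by metis
next
  assume "E i j"
  hence "(\<lambda>k. E i k) = (\<lambda>k. E j k)" using E_sym E_trans by (metis)
  thus "nd i = nd j" by (simp add: nd_def rep_def)
qed

lemma eq_sym: "eqn i c j \<in> L \<Longrightarrow> eqn j c i \<in> L"
  using cEq5 cEqT by blast

lemma eq_cong: "eqn i c j \<in> L \<Longrightarrow> E i i' \<Longrightarrow> E j j' \<Longrightarrow> eqn i' c j' \<in> L"
  unfolding E_def by (meson cS3 eq_sym)

lemma Nodes_M[simp]: "Nodes M = range nd" and gval_M[simp]: "gval M = nd"
  by (simp_all add: M_def)

lemma Val_iff: "nd i \<in> Val M p \<longleftrightarrow> NAt i (NProp p) \<in> L"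
proof
  assume "nd i \<in> Val M p"
  then obtain k where "nd i = nd k" "NAt k (NProp p) \<in> L" by (auto simp: M_def)
  thus "NAt i (NProp p) \<in> L" using nd_eq E_sym cS1p unfolding E_def by metis
qed (auto simp: M_def)

lemma Rel_iff: "Rel M a (nd i) (nd j) \<longleftrightarrow> NAt i (NDia a (NNom j)) \<in> L"
proof
  assume "Rel M a (nd i) (nd j)"
  then obtain i' j' where "nd i = nd i'" "nd j = nd j'" "NAt i' (NDia a (NNom j')) \<in> L" by (auto simp: M_def)
  thus "NAt i (NDia a (NNom j)) \<in> L" using nd_eq E_sym cS1d cS2 unfolding E_def by metis
qed (auto simp: M_def)

lemma Eqv_iff: "Eqv M c (nd i) (nd j) \<longleftrightarrow> eqn i c j \<in> L"
proof
  assume "Eqv M c (nd i) (nd j)"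
  then obtain i' j' where "nd i = nd i'" "nd j = nd j'" "eqn i' c j' \<in> L" by (auto simp: M_def)
  thus "eqn i c j \<in> L" using nd_eq E_sym eq_cong by metis
qed (auto simp: M_def)

lemma model: "is_model M"
  unfolding is_model_def
proof (intro conjI allI impI)
  show "Nodes M \<noteq> {}" by simp
  fix a x y assume "Rel M a x y" thus "x \<in> Nodes M" by (auto simp: M_def)
next
  fix a x y assume "Rel M a x y" thus "y \<in> Nodes M" by (auto simp: M_def)
next
  fix i show "gval M i \<in> Nodes M" by simp
next
  fix p show "Val M p \<subseteq> Nodes M" by (auto simp: M_def)
next
  fix c
  show "equiv (Nodes M) {(x, y). Eqv M c x y}"
  proof (rule equivI)
    show "{(x, y). Eqv M c x y} \<subseteq> Nodes M \<times> Nodes M" by (auto simp: M_def)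
    show "refl_on (Nodes M) {(x, y). Eqv M c x y}"
    proof (rule refl_onI)
      fix x assume "x \<in> Nodes M"
      then obtain i where "x = nd i" by auto
      thus "(x, x) \<in> {(x, y). Eqv M c x y}" using Eqv_iff cEqT by simp
    qed
    show "sym {(x, y). Eqv M c x y}"
    proof (rule symI)
      fix x y assume "(x, y) \<in> {(x, y). Eqv M c x y}"
      hence e: "Eqv M c x y" by simp
      hence "x \<in> range nd" "y \<in> range nd" by (auto simp: M_def)
      then obtain i j where "x = nd i" "y = nd j" by blast
      note e this
      thus "(y, x) \<in> {(x, y). Eqv M c x y}" using Eqv_iff eq_sym by simp
    qed
    show "trans {(x, y). Eqv M c x y}"
    proof (rule transI)
      fix x y z assume "(x, y) \<in> {(x, y). Eqv M c x y}" "(y, z) \<in> {(x, y). Eqv M c x y}"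
      hence e: "Eqv M c x y" "Eqv M c y z" by simp_all
      hence "x \<in> range nd" "y \<in> range nd" "z \<in> range nd" by (auto simp: M_def)
      then obtain i j k where "x = nd i" "y = nd j" "z = nd k" by blast
      note e = e this
      hence "eqn i c j \<in> L" "eqn j c k \<in> L" using Eqv_iff e by simp_all
      hence "eqn i c k \<in> L" using eq_sym cEq5 by blast
      thus "(x, z) \<in> {(x, y). Eqv M c x y}" using Eqv_iff \<open>x = nd i\<close> \<open>z = nd k\<close> by simp
    qed
  qed
qed

end



context cons begin

lemma nsem_nd_nom: "nsem M (nd i) (NNom j) \<longleftrightarrow> E i j"
  using nd_eq E_sym by auto

lemma truth: "(NAt i \<phi> \<in> L \<longrightarrow> nsem M (nd i) \<phi>) \<and> (NAt i \<phi> \<in> R \<longrightarrow> \<not> nsem M (nd i) \<phi>)"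
proof (induction "wn \<phi>" arbitrary: \<phi> i rule: less_induct)
  case less
  note IH = less.hyps
  have cmpcase: "?case" if phi: "\<phi> = cmp b \<alpha> c \<beta>" for b \<alpha> c \<beta>
  proof (intro conjI impI)
    have lt1: "wn (dia \<alpha> (NNom j)) < wn \<phi>" and lt2: "wn (dia \<beta> (NNom j)) < wn \<phi>" for j
      using wn_dia_lt phi by simp_all
    assume "NAt i \<phi> \<in> L"
    then obtain j k where jk: "NAt i (dia \<alpha> (NNom j)) \<in> L" "NAt i (dia \<beta> (NNom k)) \<in> L"
      "cmp b (PNom j) c (PNom k) \<in> L" using cCmpL phi by blast
    have "nsem M (nd i) (dia \<alpha> (NNom j))" using IH[OF lt1, of i j] jk by blast
    then obtain n' where n': "n' \<in> range nd" "psem M (nd i) n' \<alpha>" "nd j = n'"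
      using sem_dia[OF model] by auto
    have "nsem M (nd i) (dia \<beta> (NNom k))" using IH[OF lt2, of i k] jk by blast
    then obtain n'' where n'': "n'' \<in> range nd" "psem M (nd i) n'' \<beta>" "nd k = n''"
      using sem_dia[OF model] by auto
    have "Eqv M c (nd j) (nd k) = b"
    proof (cases b)
      case True thus ?thesis using jk(3) Eqv_iff by simp
    next
      case False
      hence "eqn j c k \<in> R" using jk(3) cNEqL by simp
      thus ?thesis using False Eqv_iff noAx by blast
    qed
    thus "nsem M (nd i) \<phi>" unfolding phi nsem_cmp using n' n'' by auto
  next
    have lt1: "wn (dia \<alpha> (NNom j)) < wn \<phi>" and lt2: "wn (dia \<beta> (NNom j)) < wn \<phi>" for j
      using wn_dia_lt phi by simp_all
    assume r: "NAt i \<phi> \<in> R"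
    show "\<not> nsem M (nd i) \<phi>"
    proof
    assume s: "nsem M (nd i) \<phi>"
    then obtain n' n'' where nn: "n' \<in> range nd" "n'' \<in> range nd" "psem M (nd i) n' \<alpha>"
      "psem M (nd i) n'' \<beta>" "Eqv M c n' n'' = b"
      unfolding phi nsem_cmp by auto
    then obtain j k where jk: "n' = nd j" "n'' = nd k" by blast
    have d1: "nsem M (nd i) (dia \<alpha> (NNom j))" using sem_dia[OF model] nn jk by auto
    have d2: "nsem M (nd i) (dia \<beta> (NNom k))" using sem_dia[OF model] nn jk by auto
    have l1: "NAt i (dia \<alpha> (NNom j)) \<in> L"
      using cCut[of "NAt i (dia \<alpha> (NNom j))"] IH[OF lt1, of i j] d1 by auto
    have l2: "NAt i (dia \<beta> (NNom k)) \<in> L"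
      using cCut[of "NAt i (dia \<beta> (NNom k))"] IH[OF lt2, of i k] d2 by auto
    have cr: "cmp b (PNom j) c (PNom k) \<in> R" using cCmpR[OF l1 l2] r phi by simp
    show False
    proof (cases b)
      case True
      hence "eqn j c k \<in> R" "eqn j c k \<in> L" using cr nn jk Eqv_iff by auto
      thus False using noAx by blast
    next
      case False
      hence "eqn j c k \<in> L" using cr cNEqR by simp
      thus False using nn jk Eqv_iff False by auto
    qed
    qed
  qed
  show ?case
  proof (cases \<phi>)
    case (NProp p)
    show ?thesis
    proof (intro conjI impI)
      assume "NAt i \<phi> \<in> L" thus "nsem M (nd i) \<phi>" using NProp Val_iff by simp
    next
      assume "NAt i \<phi> \<in> R" thus "\<not> nsem M (nd i) \<phi>" using NProp Val_iff noAx[of "NAt i (NProp p)"] by auto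
    qed
  next
    case (NNom j)
    show ?thesis
    proof (intro conjI impI)
      assume "NAt i \<phi> \<in> L" thus "nsem M (nd i) \<phi>" using NNom nsem_nd_nom E_def by simp
    next
      assume "NAt i \<phi> \<in> R" thus "\<not> nsem M (nd i) \<phi>" using NNom nsem_nd_nom E_def noAx[of "NAt i (NNom j)"] by auto
    qed
  next
    case NBot thus ?thesis using noBot by auto
  next
    case (NImp \<phi>1 \<phi>2)
    have ih1: "(NAt i \<phi>1 \<in> L \<longrightarrow> nsem M (nd i) \<phi>1) \<and> (NAt i \<phi>1 \<in> R \<longrightarrow> \<not> nsem M (nd i) \<phi>1)"
      using IH[of \<phi>1 i] NImp by simp
    have ih2: "(NAt i \<phi>2 \<in> L \<longrightarrow> nsem M (nd i) \<phi>2) \<and> (NAt i \<phi>2 \<in> R \<longrightarrow> \<not> nsem M (nd i) \<phi>2)"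
      using IH[of \<phi>2 i] NImp by simp
    show ?thesis using ih1 ih2 cImpL[of i \<phi>1 \<phi>2] cImpR[of i \<phi>1 \<phi>2] NImp by auto
  next
    case (NAt j \<psi>)
    have ih: "(NAt j \<psi> \<in> L \<longrightarrow> nsem M (nd j) \<psi>) \<and> (NAt j \<psi> \<in> R \<longrightarrow> \<not> nsem M (nd j) \<psi>)"
      using IH[of \<psi> j] NAt by simp
    show ?thesis using ih cAtL[of i j \<psi>] cAtR[of i j \<psi>] NAt by auto
  next
    case (NDia a \<psi>)
    show ?thesis
    proof (intro conjI impI)
      assume "NAt i \<phi> \<in> L"
      then obtain j where j: "NAt i (NDia a (NNom j)) \<in> L" "NAt j \<psi> \<in> L" using cDiaL NDia by blast
      have "nsem M (nd j) \<psi>" using IH[of \<psi> j] NDia j by simp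
      moreover have "Rel M a (nd i) (nd j)" using Rel_iff j by simp
      ultimately show "nsem M (nd i) \<phi>" using NDia by auto
    next
      assume r: "NAt i \<phi> \<in> R"
      show "\<not> nsem M (nd i) \<phi>"
      proof
        assume "nsem M (nd i) \<phi>"
        then obtain j where j: "Rel M a (nd i) (nd j)" "nsem M (nd j) \<psi>" using NDia by auto
        hence "NAt j \<psi> \<in> R" using Rel_iff cDiaR r NDia by blast
        thus False using IH[of \<psi> j] NDia j by simp
      qed
    qed
  next
    case (NEq \<alpha> c \<beta>) thus ?thesis using cmpcase[of True \<alpha> c \<beta>] by simp
  next
    case (NNeq \<alpha> c \<beta>) thus ?thesis using cmpcase[of False \<alpha> c \<beta>] by simp
  qed
qed

lemma truth_seq:
  assumes "seq_formula \<phi>" "n \<in> Nodes M"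
  shows "(\<phi> \<in> L \<longrightarrow> nsem M n \<phi>) \<and> (\<phi> \<in> R \<longrightarrow> \<not> nsem M n \<phi>)"
proof -
  have ee: "nsem M n (eqn i c j) \<longleftrightarrow> Eqv M c (nd i) (nd j)" for i c j by auto
  have nn: "nsem M n (neqn i c j) \<longleftrightarrow> \<not> Eqv M c (nd i) (nd j)" for i c j by auto
  from assms(1) consider (a) i \<psi> where "\<phi> = NAt i \<psi>" | (b) i c j where "\<phi> = eqn i c j"
    | (c) i c j where "\<phi> = neqn i c j" unfolding seq_formula_def by blast
  thus ?thesis
  proof cases
    case a thus ?thesis using truth[of i \<psi>] by simp
  next
    case b thus ?thesis using ee Eqv_iff noAx[of "eqn i c j"] by auto
  next
    case c thus ?thesis using nn Eqv_iff noAx[of "eqn i c j"] cNEqL cNEqR by auto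
  qed
qed

end

theorem theorem3:
  fixes \<Gamma> \<Delta> :: "('p :: {countable, infinite}, 'n :: {countable, infinite},
                     'm :: finite, 'c :: finite) node set"
  assumes "is_sequent \<Gamma> \<Delta>"
    and "valid_seq \<Gamma> \<Delta>"
  shows "G_prov \<Gamma> \<Delta>"
proof (rule ccontr)
  assume np: "\<not> G_prov \<Gamma> \<Delta>"
  interpret cons \<Gamma> \<Delta> using assms(1) np by unfold_locales
  have nd0: "nd undefined \<in> Nodes M" by simp
  have sq: "\<forall>\<phi>\<in>\<Gamma> \<union> \<Delta>. seq_formula \<phi>" using assms(1) by (simp add: is_sequent_def)
  have GL: "\<Gamma> \<subseteq> L" using stL[of _ 0] by auto
  have DR: "\<Delta> \<subseteq> R" using stR[of _ 0] by auto
  have "\<forall>\<gamma>\<in>\<Gamma>. nsem M (nd undefined) \<gamma>" using truth_seq[OF _ nd0] sq GL by blast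
  moreover have "\<forall>\<delta>\<in>\<Delta>. \<not> nsem M (nd undefined) \<delta>" using truth_seq[OF _ nd0] sq DR by blast
  ultimately show False using assms(2) model nd0 unfolding valid_seq_def by blast
qed


end
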